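(* Let $E=\{(x,y)\in\mathbb{R}^2: (x/a)^2+(y/b)^2<1\}$ with $0<b\le a$. Then \[ \frac12\left(\frac ab+\frac ba\right)\le P(E)\le\frac{1}{\sin\frac{b\pi}{2a}}\le\frac{2}{\pi}\left(\frac ab+\frac ba\right). \]
   Context: For four distinct points $a_1,a_2,a_3,a_4\in\mathbb{R}^2$ set $p(a_1,a_2,a_3,a_4)=\frac{|a_1-a_2||a_3-a_4|+|a_1-a_4||a_2-a_3|}{|a_1-a_3||a_2-a_4|}$. For a domain $D$ whose boundary is a Jordan curve, $P(D)=\sup p(a_1,a_2,a_3,a_4)$ over all distinct $a_1,a_2,a_3,a_4\in\partial D$ occurring in this order when $\partial D$ is traversed in the positive direction. *)

theory Defs
  imports "HOL-Analysis.Analysis"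
begin

definition pfun :: "real^2 \<Rightarrow> real^2 \<Rightarrow> real^2 \<Rightarrow> real^2 \<Rightarrow> real" where
  "pfun a1 a2 a3 a4 =
     (dist a1 a2 * dist a3 a4 + dist a1 a4 * dist a2 a3) / (dist a1 a3 * dist a2 a4)"

text \<open>The order is given by any simple closed
  parametrization g of the boundary; p is invariant under cyclic shifts and reversal, so the
  choice of parametrization/orientation does not matter. Valued in ereal so that an
  unbounded set gives infinity.\<close>
definition PJ :: "(real^2) set \<Rightarrow> ereal" where
  "PJ D = (SUP q \<in> {(a1, a2, a3, a4). \<exists>g s1 s2 s3 s4.
              simple_path g \<and> pathfinish g = pathstart g \<and> path_image g = frontier D \<and>
              0 \<le> s1 \<and> s1 < s2 \<and> s2 < s3 \<and> s3 < s4 \<and> s4 < 1 \<and>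
              a1 = g s1 \<and> a2 = g s2 \<and> a3 = g s3 \<and> a4 = g s4}.
            ereal (case q of (a1, a2, a3, a4) \<Rightarrow> pfun a1 a2 a3 a4))"

definition ellipse :: "real \<Rightarrow> real \<Rightarrow> (real^2) set" where
  "ellipse a b = {x. (x$1 / a)^2 + (x$2 / b)^2 < 1}"

end

theory Submission
  imports Defs "HOL-Analysis.Analysis"
begin


lemma prodF:
  fixes P Q phi psi :: real
  shows "(P - Q*cos(phi-psi))*(P - Q*cos(phi+psi)) = P^2 - 2*P*Q*cos phi*cos psi + Q^2*(cos psi)^2 - Q^2*(sin phi)^2"
proof -
  have h1: "(sin phi)^2 + (cos phi)^2 = 1" "(sin psi)^2 + (cos psi)^2 = 1" by simp_all
  show ?thesis unfolding cos_diff cos_add using h1 by algebra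
qed

lemma Fnn: fixes P Q u :: real assumes "0 \<le> Q" "Q \<le> P" shows "0 \<le> P - Q*cos u"
proof -
  have "Q*cos u \<le> Q" using assms by (simp add: mult_left_le)
  then show ?thesis using assms by simp
qed

lemma boundL:
  fixes P Q phi psi :: real
  assumes "0 \<le> Q" "Q \<le> P"
  shows "sqrt((P - Q*cos(phi-psi))*(P - Q*cos(phi+psi))) \<le> P - Q*cos phi*cos psi"
proof -
  have c1: "\<bar>cos phi * cos psi\<bar> \<le> 1" by (simp add: abs_mult mult_le_one)
  have nn: "0 \<le> P - Q*cos phi*cos psi"
  proof -
    have "Q*(cos phi*cos psi) \<le> Q" using c1 assms by (metis abs_le_D1 mult.commute mult_left_le)
    then show ?thesis using assms by (simp add: mult.assoc)
  qed
  have h1: "(sin phi)^2 + (cos phi)^2 = 1" by simp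
  have "(P - Q*cos phi*cos psi)^2 - (P - Q*cos(phi-psi))*(P - Q*cos(phi+psi))
        = Q^2*(1-(cos phi)^2)*(1-(cos psi)^2)"
    unfolding prodF using h1 by algebra
  moreover have "0 \<le> Q^2*(1-(cos phi)^2)*(1-(cos psi)^2)"
    by (simp add: abs_square_le_1)
  ultimately show ?thesis using nn
    by (intro real_le_lsqrt) auto
qed

lemma boundK:
  fixes a b phi psi :: real
  assumes "0 < b" "b \<le> a"
  defines "P \<equiv> (a^2+b^2)/2" and "Q \<equiv> (a^2-b^2)/2"
  shows "a*b*(P - Q*cos phi*cos psi) \<le> P * sqrt((P - Q*cos(phi-psi))*(P - Q*cos(phi+psi)))"
proof -
  define c where "c = cos psi"
  define C where "C = cos phi"
  have Q0: "0 \<le> Q" unfolding Q_def using assms by (simp add: power_mono)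
  have QP: "Q \<le> P" unfolding Q_def P_def using assms by simp
  have ab: "(a*b)^2 = P^2 - Q^2" unfolding P_def Q_def by (simp add: power2_eq_square field_simps)
  have cb: "\<bar>c\<bar> \<le> 1" "\<bar>C\<bar> \<le> 1" unfolding c_def C_def by simp_all
  have G: "(P - Q*cos(phi-psi))*(P - Q*cos(phi+psi)) = P^2 - 2*P*Q*C*c + Q^2*c^2 - Q^2*(1 - C^2)"
    unfolding prodF c_def C_def by (simp add: sin_squared_eq)
  have u1: "P*(1 - \<bar>c\<bar>*\<bar>C\<bar>) \<le> P - Q*C*c"
  proof -
    have "Q*(C*c) \<le> Q*(\<bar>c\<bar>*\<bar>C\<bar>)" using Q0 by (intro mult_left_mono) (auto simp: abs_mult[symmetric] mult.commute)
    also have "\<dots> \<le> P*(\<bar>c\<bar>*\<bar>C\<bar>)" using QP by (intro mult_right_mono) auto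
    finally show ?thesis by (simp add: algebra_simps)
  qed
  have u0: "0 \<le> P*(1 - \<bar>c\<bar>*\<bar>C\<bar>)" using cb Q0 QP by (intro mult_nonneg_nonneg) (auto simp: mult_le_one)
  have sq: "(P*(1 - \<bar>c\<bar>*\<bar>C\<bar>))^2 \<le> (P - Q*C*c)^2" using u0 u1 by (intro power_mono) auto
  have sq2: "P^2*((1-c^2)*(1-C^2)) \<le> (P*(1 - \<bar>c\<bar>*\<bar>C\<bar>))^2"
  proof -
    have "(1-c^2)*(1-C^2) \<le> (1 - \<bar>c\<bar>*\<bar>C\<bar>)^2"
      using sum_squares_ge_zero[of 0 "\<bar>c\<bar> - \<bar>C\<bar>"] 
      by (simp add: power2_eq_square algebra_simps)
    then show ?thesis by (simp add: power_mult_distrib mult_left_mono)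
  qed
  have main: "(a*b*(P - Q*C*c))^2 \<le> (P * sqrt((P - Q*cos(phi-psi))*(P - Q*cos(phi+psi))))^2"
  proof -
    have Gnn: "0 \<le> (P - Q*cos(phi-psi))*(P - Q*cos(phi+psi))"
      using Q0 QP by (intro mult_nonneg_nonneg Fnn)
    have "(P * sqrt((P - Q*cos(phi-psi))*(P - Q*cos(phi+psi))))^2 = P^2 * (P^2 - 2*P*Q*C*c + Q^2*c^2 - Q^2*(1 - C^2))"
      using Gnn G by (simp add: power_mult_distrib)
    moreover have "(a*b*(P - Q*C*c))^2 = (P^2 - Q^2)*(P - Q*C*c)^2" using ab by (simp add: power_mult_distrib)
    moreover have "P^2 * (P^2 - 2*P*Q*C*c + Q^2*c^2 - Q^2*(1 - C^2)) - (P^2 - Q^2)*(P - Q*C*c)^2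
        = Q^2*((P - Q*C*c)^2 - P^2*((1-c^2)*(1-C^2)))" by (simp add: power2_eq_square algebra_simps)
    moreover have "0 \<le> Q^2*((P - Q*C*c)^2 - P^2*((1-c^2)*(1-C^2)))" using sq sq2 by simp
    ultimately show ?thesis by linarith
  qed
  have "0 \<le> P * sqrt((P - Q*cos(phi-psi))*(P - Q*cos(phi+psi)))" using QP Q0 by (intro mult_nonneg_nonneg real_sqrt_ge_zero Fnn) auto
  then have "\<bar>a*b*(P - Q*C*c)\<bar> \<le> P * sqrt((P - Q*cos(phi-psi))*(P - Q*cos(phi+psi)))"
    using main by (metis abs_of_nonneg power2_le_imp_le abs_le_square_iff)
  then show ?thesis unfolding c_def C_def by (simp add: mult.assoc)
qed

lemma lin_id: fixes c0 c1 c2 P Q C :: real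
  shows "(c2-c0)/2*(P-Q*C*c1) + (c0-c1)/2*(P-Q*C*c2) = (c2-c1)/2*(P-Q*C*c0)"
  by (simp add: field_simps)

lemma core:
  fixes a b x y z phi :: real
  assumes b0: "0 < b" and ba: "b \<le> a"
    and sx: "0 \<le> sin x" and sy: "0 \<le> sin y" and sz: "0 \<le> sin z" and sxyz: "0 \<le> sin (x+y+z)"
  defines "P \<equiv> (a^2+b^2)/2" and "Q \<equiv> (a^2-b^2)/2"
  defines "R \<equiv> (\<lambda>psi. sqrt((P - Q*cos(phi-psi))*(P - Q*cos(phi+psi))))"
  shows "sin x * sin z * R (x+2*y+z) + sin (x+y+z) * sin y * R (x-z)
         \<le> (P/(a*b)) * (sin (x+y) * sin (y+z) * R (x+z))"
proof -
  have Q0: "0 \<le> Q" unfolding Q_def using assms by (simp add: power_mono)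
  have QP: "Q \<le> P" unfolding Q_def P_def using assms by simp
  have ab0: "0 < a*b" using b0 ba by simp
  define C where "C = cos phi"
  have s1: "sin x * sin z = (cos (x-z) - cos (x+z))/2" by (simp add: sin_times_sin)
  have s2: "sin (x+y+z) * sin y = (cos (x+z) - cos (x+2*y+z))/2"
  proof -
    have "x+y+z-y = x+z" "x+y+z+y = x+2*y+z" by simp_all
    then show ?thesis using sin_times_sin[of "x+y+z" y] by metis
  qed
  have s3: "sin (x+y) * sin (y+z) = (cos (x-z) - cos (x+2*y+z))/2"
  proof -
    have "x+y-(y+z) = x-z" "x+y+(y+z) = x+2*y+z" by simp_all
    then show ?thesis using sin_times_sin[of "x+y" "y+z"] by metis
  qed
  have L1: "R (x+2*y+z) \<le> P - Q*C*cos (x+2*y+z)" unfolding R_def C_def using boundL[OF Q0 QP] .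
  have L2: "R (x-z) \<le> P - Q*C*cos (x-z)" unfolding R_def C_def using boundL[OF Q0 QP] .
  have "sin x * sin z * R (x+2*y+z) + sin (x+y+z) * sin y * R (x-z)
        \<le> sin x * sin z * (P - Q*C*cos (x+2*y+z)) + sin (x+y+z) * sin y * (P - Q*C*cos (x-z))"
    using L1 L2 sx sy sz sxyz by (intro add_mono mult_left_mono) auto
  also have "\<dots> = sin (x+y) * sin (y+z) * (P - Q*C*cos (x+z))"
    unfolding s1 s2 s3 by (rule lin_id)
  also have "\<dots> \<le> sin (x+y) * sin (y+z) * ((P/(a*b)) * R (x+z))"
  proof (rule mult_left_mono)
    have "a*b*(P - Q*C*cos (x+z)) \<le> P * R (x+z)" unfolding R_def C_def P_def Q_def
      using boundK[OF b0 ba] by simp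
    then have "(P - Q*C*cos (x+z)) * (a*b) \<le> P * R (x+z)" by (simp add: mult.commute)
    then have "P - Q*C*cos (x+z) \<le> P * R (x+z) / (a*b)" using ab0 by (simp add: pos_le_divide_eq)
    then show "P - Q*C*cos (x+z) \<le> (P/(a*b)) * R (x+z)" by simp
    have "sin (x+y) * sin (y+z) = sin x * sin z + sin (x+y+z) * sin y"
      unfolding s1 s2 s3 by (simp add: field_simps)
    then show "0 \<le> sin (x+y) * sin (y+z)" using sx sy sz sxyz by simp
  qed
  finally show ?thesis by (simp add: mult_ac)
qed

lemma dist2: fixes x y :: "real^2" shows "dist x y = sqrt ((x$1 - y$1)^2 + (x$2 - y$2)^2)"
  unfolding dist_norm norm_vec_def L2_set_def by (simp add: UNIV_2)

definition wpt :: "real \<Rightarrow> real \<Rightarrow> real \<Rightarrow> real^2" where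
  "wpt a b t = vector [a * cos t, b * sin t]"

lemma dist_wpt:
  fixes a b s t :: real
  assumes "0 < b" "b \<le> a"
  shows "dist (wpt a b s) (wpt a b t) = 2 * \<bar>sin ((s-t)/2)\<bar> * sqrt ((a^2+b^2)/2 - (a^2-b^2)/2 * cos (s+t))"
proof -
  define m where "m = (s+t)/2"
  define d where "d = (s-t)/2"
  have st: "s = m + d" "t = m - d" "s + t = 2*m" unfolding m_def d_def by (simp_all add: field_simps)
  have e1: "cos s - cos t = - 2 * sin m * sin d" unfolding st by (simp add: cos_add cos_diff)
  have e2: "sin s - sin t = 2 * cos m * sin d" unfolding st by (simp add: sin_add sin_diff)
  have pm: "(sin m)^2 + (cos m)^2 = 1" by simp
  have "(a * cos s - a * cos t)^2 + (b * sin s - b * sin t)^2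
      = (2 * \<bar>sin d\<bar>)^2 * ((a^2+b^2)/2 - (a^2-b^2)/2 * cos (s+t))"
  proof -
    have "(a * cos s - a * cos t)^2 + (b * sin s - b * sin t)^2
          = a^2 * (cos s - cos t)^2 + b^2*(sin s - sin t)^2" by (simp add: power2_eq_square algebra_simps)
    also have "\<dots> = 4 * (sin d)^2 * (a^2 * (sin m)^2 + b^2 * (cos m)^2)"
      unfolding e1 e2 by (simp add: power2_eq_square algebra_simps)
    also have "\<dots> = (2 * \<bar>sin d\<bar>)^2 * ((a^2+b^2)/2 - (a^2-b^2)/2 * cos (s+t))"
    proof -
      have c2: "cos (s+t) = (cos m)^2 - (sin m)^2" unfolding st(3) cos_double ..
      have "(2 * \<bar>sin d\<bar>)^2 = 4 * (sin d)^2" by (simp add: power_mult_distrib)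
      then show ?thesis unfolding c2 using pm by algebra
    qed
    finally show ?thesis .
  qed
  then have "dist (wpt a b s) (wpt a b t) = sqrt ((2 * \<bar>sin d\<bar>)^2 * ((a^2+b^2)/2 - (a^2-b^2)/2 * cos (s+t)))"
    unfolding dist2 wpt_def by simp
  also have "\<dots> = 2 * \<bar>sin d\<bar> * sqrt ((a^2+b^2)/2 - (a^2-b^2)/2 * cos (s+t))"
    by (simp add: real_sqrt_mult)
  finally show ?thesis unfolding d_def .
qed

lemma ellipse_p:
  fixes a b t1 t2 t3 t4 :: real
  assumes b0: "0 < b" and ba: "b \<le> a"
    and t: "t1 < t2" "t2 < t3" "t3 < t4" "t4 < t1 + 2*pi"
  shows "pfun (wpt a b t1) (wpt a b t2) (wpt a b t3) (wpt a b t4) \<le> ((a^2+b^2)/2)/(a*b)"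
proof -
  define P where "P = (a^2+b^2)/2"
  define Q where "Q = (a^2-b^2)/2"
  define x where "x = (t2-t1)/2"
  define y where "y = (t3-t2)/2"
  define z where "z = (t4-t3)/2"
  define phi where "phi = (t1+t2+t3+t4)/2"
  define R where "R = (\<lambda>psi. sqrt((P - Q*cos(phi-psi))*(P - Q*cos(phi+psi))))"
  have Q0: "0 \<le> Q" unfolding Q_def using assms by (simp add: power_mono)
  have QP: "Q \<le> P" unfolding Q_def P_def using assms by simp
  have pos: "0 < x" "0 < y" "0 < z" "x+y+z < pi" using t unfolding x_def y_def z_def by (simp_all add: field_simps)
  have sinpos: "0 < sin u" if "0 < u" "u < pi" for u using that sin_gt_zero by blast
  have sx: "0 < sin x" and sy: "0 < sin y" and sz: "0 < sin z" and sxyz: "0 < sin (x+y+z)"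
    and sxy: "0 < sin (x+y)" and syz: "0 < sin (y+z)"
    using pos by (auto intro!: sinpos)
  have D: "dist (wpt a b u) (wpt a b v) = 2 * sin ((v-u)/2) * sqrt (P - Q * cos (u+v))"
    if "0 < sin ((v-u)/2)" for u v
  proof -
    have "\<bar>sin ((u-v)/2)\<bar> = sin ((v-u)/2)"
    proof -
      have "(u-v)/2 = - ((v-u)/2)" by (simp add: field_simps)
      then have "sin ((u-v)/2) = - sin ((v-u)/2)" by (metis sin_minus)
      then show ?thesis using that by simp
    qed
    then show ?thesis using dist_wpt[OF b0 ba, of u v] unfolding P_def Q_def by simp
  qed
  have e12: "(t2-t1)/2 = x" "t1+t2 = phi-(x+2*y+z)" unfolding x_def y_def z_def phi_def by (simp_all add: field_simps)
  have e34: "(t4-t3)/2 = z" "t3+t4 = phi+(x+2*y+z)" unfolding x_def y_def z_def phi_def by (simp_all add: field_simps)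
  have e14: "(t4-t1)/2 = x+y+z" "t1+t4 = phi-(x-z)" unfolding x_def y_def z_def phi_def by (simp_all add: field_simps)
  have e23: "(t3-t2)/2 = y" "t2+t3 = phi+(x-z)" unfolding x_def y_def z_def phi_def by (simp_all add: field_simps)
  have e13: "(t3-t1)/2 = x+y" "t1+t3 = phi-(x+z)" unfolding x_def y_def z_def phi_def by (simp_all add: field_simps)
  have e24: "(t4-t2)/2 = y+z" "t2+t4 = phi+(x+z)" unfolding x_def y_def z_def phi_def by (simp_all add: field_simps)
  have d12: "dist (wpt a b t1) (wpt a b t2) = 2 * sin x * sqrt (P - Q * cos (phi-(x+2*y+z)))"
    using D[where u=t1 and v=t2] unfolding e12 using sx by simp
  have d34: "dist (wpt a b t3) (wpt a b t4) = 2 * sin z * sqrt (P - Q * cos (phi+(x+2*y+z)))"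
    using D[where u=t3 and v=t4] unfolding e34 using sz by simp
  have d14: "dist (wpt a b t1) (wpt a b t4) = 2 * sin (x+y+z) * sqrt (P - Q * cos (phi-(x-z)))"
    using D[where u=t1 and v=t4] unfolding e14 using sxyz by simp
  have d23: "dist (wpt a b t2) (wpt a b t3) = 2 * sin y * sqrt (P - Q * cos (phi+(x-z)))"
    using D[where u=t2 and v=t3] unfolding e23 using sy by simp
  have d13: "dist (wpt a b t1) (wpt a b t3) = 2 * sin (x+y) * sqrt (P - Q * cos (phi-(x+z)))"
    using D[where u=t1 and v=t3] unfolding e13 using sxy by simp
  have d24: "dist (wpt a b t2) (wpt a b t4) = 2 * sin (y+z) * sqrt (P - Q * cos (phi+(x+z)))"
    using D[where u=t2 and v=t4] unfolding e24 using syz by simp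
  have num: "dist (wpt a b t1) (wpt a b t2) * dist (wpt a b t3) (wpt a b t4)
      + dist (wpt a b t1) (wpt a b t4) * dist (wpt a b t2) (wpt a b t3)
      = 4 * (sin x * sin z * R (x+2*y+z) + sin (x+y+z) * sin y * R (x-z))"
    unfolding d12 d34 d14 d23 R_def real_sqrt_mult by (simp add: distrib_left mult_ac)
  have den: "dist (wpt a b t1) (wpt a b t3) * dist (wpt a b t2) (wpt a b t4)
      = 4 * (sin (x+y) * sin (y+z) * R (x+z))"
    unfolding d13 d24 R_def real_sqrt_mult by (simp add: mult_ac)
  have Rpos: "0 < R (x+z)"
  proof -
    have "b^2 \<le> P - Q * cos u" for u
    proof -
      have "Q * cos u \<le> Q" using Q0 by (simp add: mult_left_le)
      then show ?thesis unfolding P_def Q_def by (simp add: field_simps)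
    qed
    then have "0 < P - Q * cos u" for u using b0 by (smt (verit) zero_less_power)
    then show ?thesis unfolding R_def by simp
  qed
  have dpos: "0 < 4 * (sin (x+y) * sin (y+z) * R (x+z))" using sxy syz Rpos by simp
  have c: "sin x * sin z * R (x+2*y+z) + sin (x+y+z) * sin y * R (x-z)
         \<le> (P/(a*b)) * (sin (x+y) * sin (y+z) * R (x+z))"
    unfolding R_def P_def Q_def using core[OF b0 ba, of x y z phi] sx sy sz sxyz by simp
  have "pfun (wpt a b t1) (wpt a b t2) (wpt a b t3) (wpt a b t4)
      = (4 * (sin x * sin z * R (x+2*y+z) + sin (x+y+z) * sin y * R (x-z))) / (4 * (sin (x+y) * sin (y+z) * R (x+z)))"
    unfolding pfun_def num den ..
  also have "\<dots> = (sin x * sin z * R (x+2*y+z) + sin (x+y+z) * sin y * R (x-z)) / (sin (x+y) * sin (y+z) * R (x+z))"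
    by (simp only: mult_divide_mult_cancel_left_if) simp
  also have "\<dots> \<le> P/(a*b)"
  proof -
    have "0 < sin (x+y) * sin (y+z) * R (x+z)" using dpos by (simp add: mult_ac)
    then show ?thesis using c by (simp add: divide_le_eq mult.commute)
  qed
  finally show ?thesis unfolding P_def .
qed

lemma wpt_periodic: "wpt a b (t + 2*pi) = wpt a b t"
  unfolding wpt_def by simp

lemma frontier_ellipse:
  fixes a b :: real
  assumes "0 < b" "b \<le> a"
  shows "frontier (ellipse a b) = {x. (x$1/a)^2 + (x$2/b)^2 = 1}"
proof -
  let ?f = "\<lambda>x::real^2. (x$1/a)^2 + (x$2/b)^2"
  have cf: "continuous_on UNIV ?f" using assms by (intro continuous_intros) auto
  have op: "open (ellipse a b)" unfolding ellipse_def
    by (rule open_Collect_less) (use cf in auto)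
  have cl: "closure (ellipse a b) \<subseteq> {x. ?f x \<le> 1}"
    by (rule closure_minimal) (auto simp: ellipse_def intro!: closed_Collect_le cf)
  have sub: "x \<in> closure (ellipse a b)" if "?f x = 1" for x
  proof -
    define sq where "sq = (\<lambda>n::nat. (1 - inverse (real (Suc n))) *\<^sub>R x)"
    have "sq \<longlonglongrightarrow> (1 - 0) *\<^sub>R x" unfolding sq_def
      by (intro tendsto_intros LIMSEQ_inverse_real_of_nat)
    then have lim: "sq \<longlonglongrightarrow> x" by simp
    have "sq n \<in> ellipse a b" for n
    proof -
      define t where "t = 1 - inverse (real (Suc n))"
      have t0: "0 \<le> t" "t < 1" unfolding t_def by (auto simp: field_simps)
      have "?f (sq n) = t^2 * ?f x" unfolding sq_def t_def[symmetric]
        by (simp add: power2_eq_square field_simps)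
      also have "\<dots> < 1" using that t0 by (simp add: power_less_one_iff abs_square_less_1)
      finally show ?thesis unfolding ellipse_def by simp
    qed
    then show ?thesis unfolding closure_sequential using lim by blast
  qed
  show ?thesis
    unfolding frontier_def interior_open[OF op]
    using cl sub by (force simp: ellipse_def)
qed

lemma ellipse_frontier_wpt:
  fixes a b :: real
  assumes "0 < b" "b \<le> a" "x \<in> frontier (ellipse a b)"
  obtains t where "x = wpt a b t"
proof -
  have "(x$1/a)^2 + (x$2/b)^2 = 1" using assms frontier_ellipse by blast
  then obtain t where "x$1/a = cos t" "x$2/b = sin t" using sincos_total_2pi by metis
  then have "x = wpt a b t" using assms unfolding wpt_def
    by (simp add: vec_eq_iff forall_2 field_simps)
  then show ?thesis using that by blast
qed

lemma wpt_frontier: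
  fixes a b :: real
  assumes "0 < b" "b \<le> a"
  shows "wpt a b t \<in> frontier (ellipse a b)"
  using assms unfolding frontier_ellipse[OF assms] wpt_def by simp

lemma pfun_rev: "pfun a1 a2 a3 a4 = pfun a4 a3 a2 a1"
  unfolding pfun_def by (simp add: dist_commute mult_ac add_ac)

lemma cyclic_bound:
  fixes a b :: real and g :: "real \<Rightarrow> real^2"
  assumes b0: "0 < b" and ba: "b \<le> a"
    and sp: "simple_path g" and img: "path_image g = frontier (ellipse a b)"
    and s: "0 \<le> s1" "s1 < s2" "s2 < s3" "s3 < s4" "s4 < 1"
  shows "pfun (g s1) (g s2) (g s3) (g s4) \<le> ((a^2+b^2)/2)/(a*b)"
proof -
  have a0: "0 < a" using b0 ba by simp
  define h where "h = (\<lambda>s. Complex (g s $ 1 / a) (g s $ 2 / b))"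
  have pg: "path g" using sp by (simp add: simple_path_def)
  have cg: "continuous_on {0..1} g" using pg by (simp add: path_def)
  have ch: "continuous_on {0..1} h" unfolding h_def
    by (intro continuous_intros cg) (use a0 b0 in auto)
  have onf: "(g s $ 1 / a)^2 + (g s $ 2 / b)^2 = 1" if "s \<in> {0..1}" for s
  proof -
    have "g s \<in> path_image g" using that by (simp add: path_image_def)
    then show ?thesis using img frontier_ellipse[OF b0 ba] by blast
  qed
  have hn: "h s \<noteq> 0" if "s \<in> {0..1}" for s
    using onf[OF that] by (auto simp: h_def complex_eq_iff)
  obtain L where cL: "continuous_on {0..1} L" and hL: "\<And>s. s \<in> {0..1} \<Longrightarrow> h s = exp (L s)"
    using continuous_logarithm_on_contractible[OF ch _ hn] convex_imp_contractible[of "{0..1::real}"]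
    by auto
  define th where "th = (\<lambda>s. Im (L s))"
  have cth: "continuous_on {0..1} th" unfolding th_def by (intro continuous_intros cL)
  have gth: "g s = wpt a b (th s)" if "s \<in> {0..1}" for s
  proof -
    have n1: "cmod (h s) = 1" using onf[OF that] by (simp add: h_def cmod_def)
    then have "exp (Re (L s)) = 1" using hL[OF that] by simp
    then have "Re (L s) = 0" by simp
    then have "h s = Complex (cos (th s)) (sin (th s))" using hL[OF that]
      unfolding th_def by (simp add: complex_eq_iff exp_eq_polar cis.sel)
    then have "g s $ 1 / a = cos (th s)" "g s $ 2 / b = sin (th s)" unfolding h_def by simp_all
    then show ?thesis using a0 b0 unfolding wpt_def by (simp add: vec_eq_iff forall_2 field_simps)
  qed
  have lf: "loop_free g" using sp by (simp add: simple_path_def)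
  have geq: "u = v" if "u \<in> {0..s4}" "v \<in> {0..s4}" "g u = g v" for u v
    using lf that s unfolding loop_free_def by fastforce
  have sub: "{s1..s4} \<subseteq> {0..1}" using s by auto
  have inj: "inj_on th {s1..s4}"
  proof (rule inj_onI)
    fix u v assume uv: "u \<in> {s1..s4}" "v \<in> {s1..s4}" "th u = th v"
    then have "g u = g v" using gth sub by auto
    then show "u = v" using geq uv s by auto
  qed
  have cth4: "continuous_on {s1..s4} th" using cth sub continuous_on_subset by blast
  have m2: "(th s1 < th s2 \<and> th s2 < th s4) \<or> (th s4 < th s2 \<and> th s2 < th s1)"
    using continuous_inj_imp_mono[OF _ _ cth4 inj, of s2] s by auto
  have m3: "(th s1 < th s3 \<and> th s3 < th s4) \<or> (th s4 < th s3 \<and> th s3 < th s1)"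
    using continuous_inj_imp_mono[OF _ _ cth4 inj, of s3] s by auto
  have inj24: "inj_on th {s2..s4}" using inj by (rule inj_on_subset) (use s in auto)
  have cth24: "continuous_on {s2..s4} th" using cth4 by (rule continuous_on_subset) (use s in auto)
  have m23: "(th s2 < th s3 \<and> th s3 < th s4) \<or> (th s4 < th s3 \<and> th s3 < th s2)"
    using continuous_inj_imp_mono[OF _ _ cth24 inj24, of s3] s by auto
  have gs: "g s1 = wpt a b (th s1)" "g s2 = wpt a b (th s2)" "g s3 = wpt a b (th s3)" "g s4 = wpt a b (th s4)"
    using gth s by auto
  have nowrap: False if "th u + 2*pi \<le> th v" "u \<in> {s1..s4}" "v \<in> {s1..s4}" for u v
  proof -
    have "\<exists>t. min u v \<le> t \<and> t \<le> max u v \<and> th t = th u + 2*pi"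
    proof (cases "u \<le> v")
      case True
      have "continuous_on {u..v} th" by (rule continuous_on_subset[OF cth4]) (use that in auto)
      then show ?thesis using IVT'[of th u "th u + 2*pi" v] True that by auto
    next
      case False
      have "continuous_on {v..u} th" by (rule continuous_on_subset[OF cth4]) (use that in auto)
      then show ?thesis using IVT2'[of th u "th u + 2*pi" v] False that by auto
    qed
    then obtain t where t: "min u v \<le> t" "t \<le> max u v" "th t = th u + 2*pi" by blast
    have tin: "t \<in> {s1..s4}" using t that by auto
    have "g t = g u" using gth[of t] gth[of u] tin that sub t(3) wpt_periodic by auto
    then have "t = u" using geq tin that s by auto
    then show False using t(3) by simp
  qed
  show ?thesis
  proof (cases "th s1 < th s4")
    case True
    then have o: "th s1 < th s2" "th s2 < th s3" "th s3 < th s4" using m2 m3 m23 by auto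
    have "th s4 < th s1 + 2*pi" using nowrap[of s1 s4] s by force
    then show ?thesis unfolding gs using ellipse_p[OF b0 ba o] by simp
  next
    case False
    then have o: "th s4 < th s3" "th s3 < th s2" "th s2 < th s1" using m2 m3 m23 by auto
    have "th s1 < th s4 + 2*pi" using nowrap[of s4 s1] s by force
    then show ?thesis unfolding gs pfun_rev[of "wpt a b (th s1)"] using ellipse_p[OF b0 ba o] by simp
  qed
qed

lemma wpt_inj:
  assumes "0 < b" "b \<le> a" "wpt a b u = wpt a b v"
  shows "\<exists>n::int. u - v = n * 2 * pi"
proof -
  have a0: "0 < a" using assms by simp
  have "a * cos u = a * cos v" "b * sin u = b * sin v"
    using assms(3) unfolding wpt_def by (metis vector_2)+
  then have "cos u = cos v" "sin u = sin v" using a0 assms(1) by simp_all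
  then have "cos (u - v) = 1" by (simp add: cos_diff flip: power2_eq_square)
  then show ?thesis using cos_one_2pi_int by blast
qed

lemma std_path:
  fixes a b :: real
  assumes b0: "0 < b" and ba: "b \<le> a"
  defines "g0 \<equiv> (\<lambda>t. wpt a b (2*pi*t))"
  shows "simple_path g0" "pathfinish g0 = pathstart g0" "path_image g0 = frontier (ellipse a b)"
proof -
  have wc: "wpt a b t = (\<chi> i. if i = 1 then a * cos t else b * sin t)" for t
    unfolding wpt_def by (simp add: vec_eq_iff forall_2)
  have "continuous_on {0..1} g0" unfolding g0_def wc
    by (intro continuous_on_vec_lambda, case_tac "i = 1") (auto intro!: continuous_intros)
  then have pg: "path g0" by (simp add: path_def)
  have lf: "loop_free g0" unfolding loop_free_def
  proof (intro ballI impI)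
    fix x y :: real assume xy: "x \<in> {0..1}" "y \<in> {0..1}" "g0 x = g0 y"
    then obtain n :: int where n: "2*pi*x - 2*pi*y = of_int n * 2 * pi" using wpt_inj[OF b0 ba] unfolding g0_def by blast
    then have "2*pi*(x - y) = 2*pi * of_int n" by (simp add: algebra_simps)
    then have "x - y = of_int n" by simp
    moreover have "-1 \<le> x - y" "x - y \<le> 1" using xy by auto
    ultimately have "n = -1 \<or> n = 0 \<or> n = 1" by linarith
    then show "x = y \<or> x = 0 \<and> y = 1 \<or> x = 1 \<and> y = 0" using \<open>x - y = of_int n\<close> xy by auto
  qed
  show "simple_path g0" using pg lf by (simp add: simple_path_def)
  show "pathfinish g0 = pathstart g0" unfolding g0_def pathfinish_def pathstart_def wpt_def by simp
  show "path_image g0 = frontier (ellipse a b)"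
  proof
    show "path_image g0 \<subseteq> frontier (ellipse a b)"
      unfolding path_image_def g0_def using wpt_frontier[OF b0 ba] by auto
    show "frontier (ellipse a b) \<subseteq> path_image g0"
    proof
      fix x assume "x \<in> frontier (ellipse a b)"
      then have "(x$1/a)^2 + (x$2/b)^2 = 1" using frontier_ellipse[OF b0 ba] by blast
      then obtain t where t: "0 \<le> t" "t < 2*pi" "x$1/a = cos t" "x$2/b = sin t"
        using sincos_total_2pi by metis
      then have "x = wpt a b t" using b0 ba unfolding wpt_def
        by (simp add: vec_eq_iff forall_2 field_simps)
      moreover have "t/(2*pi) \<in> {0..1}" using t by auto
      moreover have "g0 (t/(2*pi)) = wpt a b t" unfolding g0_def by simp
      ultimately show "x \<in> path_image g0" unfolding path_image_def by (metis image_eqI)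
    qed
  qed
qed

lemma std_points:
  fixes a b :: real
  assumes b0: "0 < b" and ba: "b \<le> a"
  shows "pfun (wpt a b 0) (wpt a b (pi/2)) (wpt a b pi) (wpt a b (3*pi/2)) = ((a^2+b^2)/2)/(a*b)"
proof -
  have c3: "cos (3*pi/2) = 0" "sin (3*pi/2) = -1"
  proof -
    have e: "3*pi/2 = pi/2 + pi" by simp
    have "cos (pi/2 + pi) = 0" "sin (pi/2 + pi) = -1"
      by (simp_all only: cos_add sin_add cos_pi_half sin_pi_half cos_pi sin_pi)
    then show "cos (3*pi/2) = 0" "sin (3*pi/2) = -1" by (metis e)+
  qed
  have a0: "0 < a" using assms by simp
  have d1: "dist (wpt a b 0) (wpt a b (pi/2)) = sqrt (a^2+b^2)"
    "dist (wpt a b pi) (wpt a b (3*pi/2)) = sqrt (a^2+b^2)"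
    "dist (wpt a b 0) (wpt a b (3*pi/2)) = sqrt (a^2+b^2)"
    "dist (wpt a b (pi/2)) (wpt a b pi) = sqrt (a^2+b^2)"
    unfolding dist2 wpt_def using c3 by simp_all
  have d2: "dist (wpt a b 0) (wpt a b pi) = 2*a" "dist (wpt a b (pi/2)) (wpt a b (3*pi/2)) = 2*b"
    unfolding dist2 wpt_def using c3 a0 b0 by (simp_all add: power2_eq_square real_sqrt_mult)
  show ?thesis unfolding pfun_def d1 d2 using a0 b0
    by (simp add: field_simps)
qed



lemma sin_lower3: fixes x :: real assumes "0 \<le> x" "x \<le> pi" shows "x - x^3/6 \<le> sin x"
proof (cases "x = 0")
  case True then show ?thesis by simp
next
  case False
  then have "x > 0" using assms by simp
  from Maclaurin_sin_expansion3[of 4 x, OF _ this] obtain t where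
    t: "0 < t" "t < x" "sin x = (\<Sum>m<4. sin_coeff m * x ^ m) + sin (t + 1/2 * real 4 * pi) / fact 4 * x ^ 4"
    by auto
  have "sin (t + 1/2 * real 4 * pi) = sin t" by (simp add: sin_add)
  moreover have "0 \<le> sin t" using t assms by (intro sin_ge_zero) auto
  moreover have "(\<Sum>m<4. sin_coeff m * x ^ m) = x - x^3/6"
  proof -
    have e: "{..<4::nat} = {0,1,2,3}" by auto
    show ?thesis unfolding e by (simp add: sin_coeff_def fact_numeral)
  qed
  ultimately show ?thesis using t(3) by simp
qed

lemma cos_upper4: fixes t :: real assumes "0 \<le> t" "t \<le> pi" shows "cos t \<le> 1 - t^2/2 + t^4/24"
proof (cases "t = 0")
  case True then show ?thesis by simp
next
  case False
  then have "t > 0" using assms by simp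
  from Maclaurin_cos_expansion2[OF this, of 5] obtain u where
    u: "0 < u" "u < t" "cos t = (\<Sum>m<5. cos_coeff m * t ^ m) + cos (u + 1/2 * real 5 * pi) / fact 5 * t ^ 5"
    by auto
  have "cos (u + 1/2 * real 5 * pi) = - sin u"
  proof -
    have "u + 1/2 * real 5 * pi = (u + pi/2) + 2*pi" by simp
    then have "cos (u + 1/2 * real 5 * pi) = cos (u + pi/2)" by (metis cos_periodic)
    then show ?thesis by (simp add: cos_add)
  qed
  moreover have "0 \<le> sin u" using u assms by (intro sin_ge_zero) auto
  moreover have "(\<Sum>m<5. cos_coeff m * t ^ m) = 1 - t^2/2 + t^4/24"
  proof -
    have e: "{..<5::nat} = {0,1,2,3,4}" by auto
    show ?thesis unfolding e by (simp add: cos_coeff_def fact_numeral)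
  qed
  ultimately show ?thesis using u(3) \<open>t > 0\<close> by simp
qed

lemma sin_lowerK: fixes x :: real assumes "0 \<le> x" "x \<le> pi/2"
  shows "pi^2 * x \<le> sin x * (pi^2 + 4*x^2)"
proof -
  have s: "x - x^3/6 \<le> sin x" using sin_lower3[of x] assms by simp
  have p: "pi < (16/5)" using pi_approx by simp
  have x2: "x^2 \<le> (pi/2)^2" using assms by (intro power_mono) auto
  have "pi^2 * x \<le> (x - x^3/6) * (pi^2 + 4*x^2)"
  proof -
    have "(x - x^3/6) * (pi^2 + 4*x^2) - pi^2 * x = x^3 * (4 - pi^2/6 - 2*x^2/3)"
      by (simp add: power2_eq_square power3_eq_cube algebra_simps)
    moreover have "0 \<le> 4 - pi^2/6 - 2*x^2/3"
    proof -
      have "2*x^2/3 \<le> pi^2/6" using x2 by (simp add: power_divide)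
      moreover have "pi^2 < (256/25)"
      proof -
        have "pi*pi < (16/5)*(16/5)" using p by (intro mult_strict_mono) auto
        then show ?thesis by (simp add: power2_eq_square)
      qed
      ultimately show ?thesis by linarith
    qed
    moreover have "0 \<le> x^3" using assms by simp
    ultimately show ?thesis by (metis diff_ge_0_iff_ge mult_nonneg_nonneg)
  qed
  also have "\<dots> \<le> sin x * (pi^2 + 4*x^2)" using s by (intro mult_right_mono) auto
  finally show ?thesis .
qed

lemma sin_upperK: fixes x :: real assumes "0 \<le> x" "x \<le> pi/2"
  shows "sin x * (pi^2 + 4*x^2) \<le> 4*pi*x"
proof (cases "x \<le> 4/5")
  case True
  have p: "(157/50) < pi" "pi < (63/20)" using pi_approx by simp_all
  have "sin x \<le> x" using sin_x_le_x assms by simp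
  then have "sin x * (pi^2 + 4*x^2) \<le> x * (pi^2 + 4*x^2)" by (intro mult_right_mono) auto
  also have "\<dots> \<le> 4*pi*x"
  proof -
    have "x^2 \<le> (4/5)^2" using True assms by (intro power_mono) auto
    moreover have "(157/50) * (17/20) \<le> pi * (4 - pi)" using p by (intro mult_mono) auto
    ultimately have "pi^2 + 4*x^2 \<le> 4*pi" by (simp add: power2_eq_square algebra_simps)
    then have "x * (pi^2 + 4*x^2) \<le> x * (4*pi)" using assms by (intro mult_left_mono) auto
    then show ?thesis by (simp add: mult_ac)
  qed
  finally show ?thesis .
next
  case False
  define t where "t = pi/2 - x"
  have p: "(157/50) < pi" "pi < (63/20)" using pi_approx by simp_all
  have t0: "0 \<le> t" "t \<le> 78/100" using assms False p unfolding t_def by simp_all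
  have sx: "sin x = cos t" unfolding t_def by (simp add: cos_diff)
  have c: "cos t \<le> 1 - t^2/2 + t^4/24" using cos_upper4[of t] t0 p by simp
  have xt: "x = pi/2 - t" unfolding t_def by simp
  have A: "pi^2 + 4*x^2 = 2*pi^2 - 4*pi*t + 4*t^2" "4*pi*x = 2*pi^2 - 4*pi*t"
    unfolding xt by (simp_all add: power2_eq_square algebra_simps)
  have Apos: "0 \<le> 2*pi^2 - 4*pi*t + 4*t^2" unfolding A(1)[symmetric] by simp
  have "sin x * (pi^2 + 4*x^2) \<le> (1 - t^2/2 + t^4/24) * (2*pi^2 - 4*pi*t + 4*t^2)"
    unfolding sx A(1) using c Apos by (intro mult_right_mono) auto
  also have "\<dots> \<le> 2*pi^2 - 4*pi*t"
  proof -
    have k: "4 \<le> (1/2 - t^2/24) * (2*pi^2 - 4*pi*t + 4*t^2)"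
    proof -
      have "47/100 \<le> 1/2 - t^2/24"
      proof -
        have "t^2 \<le> (78/100)^2" using t0 by (intro power_mono) auto
        then show ?thesis by (simp add: power2_eq_square)
      qed
      moreover have "9 \<le> 2*pi^2 - 4*pi*t + 4*t^2"
      proof -
        have "pi*t \<le> (63/20) * (78/100)" using p t0 by (intro mult_mono) auto
        moreover have "49/5 \<le> pi^2"
        proof -
          have "(157/50)*(157/50) \<le> pi*pi" using p by (intro mult_mono) auto
          then show ?thesis by (simp add: power2_eq_square)
        qed
        moreover have "0 \<le> t^2" by simp
        ultimately show ?thesis by linarith
      qed
      ultimately have "47/100 * 9 \<le> (1/2 - t^2/24) * (2*pi^2 - 4*pi*t + 4*t^2)"
        by (intro mult_mono) auto
      then show ?thesis by simp
    qed
    have "(1 - t^2/2 + t^4/24) * (2*pi^2 - 4*pi*t + 4*t^2) = (2*pi^2 - 4*pi*t) + t^2 * (4 - (1/2 - t^2/24) * (2*pi^2 - 4*pi*t + 4*t^2))"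
      by (simp add: power2_eq_square power4_eq_xxxx algebra_simps)
    moreover have "t^2 * (4 - (1/2 - t^2/24) * (2*pi^2 - 4*pi*t + 4*t^2)) \<le> 0"
      using k by (simp add: mult_nonneg_nonpos)
    ultimately show ?thesis by linarith
  qed
  finally show ?thesis unfolding A(2) .
qed


lemma aux_cancel: fixes S e c d :: real assumes "S \<noteq> 0" "e \<noteq> 0"
  shows "(c/S)*(d*S/e) = c*d/e"
  using assms by (simp add: field_simps)

theorem theorem1p6:
  fixes a b :: real
  assumes "0 < b" and "b \<le> a"
  shows "ereal ((a/b + b/a) / 2) \<le> PJ (ellipse a b)
       \<and> PJ (ellipse a b) \<le> ereal (1 / sin (b * pi / (2 * a)))
       \<and> 1 / sin (b * pi / (2 * a)) \<le> (2 / pi) * (a/b + b/a)"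
proof -
  note b0 = assms(1) and ba = assms(2)
  have a0: "0 < a" using assms by simp
  define K0 where "K0 = ((a^2+b^2)/2)/(a*b)"
  have K0e: "(a/b + b/a) / 2 = K0" unfolding K0_def using a0 b0 by (simp add: field_simps power2_eq_square)
  define S where "S = {(a1, a2, a3, a4). \<exists>g s1 s2 s3 s4.
              simple_path g \<and> pathfinish g = pathstart g \<and> path_image g = frontier (ellipse a b) \<and>
              0 \<le> s1 \<and> s1 < s2 \<and> s2 < s3 \<and> s3 < s4 \<and> s4 < 1 \<and>
              a1 = g s1 \<and> a2 = g s2 \<and> a3 = g s3 \<and> a4 = g s4}"
  define f where "f = (\<lambda>q. ereal (case q of (a1, a2, a3, a4) \<Rightarrow> pfun a1 a2 a3 a4))"
  have PJe: "PJ (ellipse a b) = (SUP q \<in> S. f q)" unfolding PJ_def S_def f_def ..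
  define x where "x = b * pi / (2 * a)"
  have x0: "0 < x" "x \<le> pi/2" unfolding x_def using a0 b0 ba by (auto simp: field_simps)
  have sx0: "0 < sin x" using x0 by (intro sin_gt_zero) auto
  have xx: "pi^2 + 4*x^2 = pi^2 * (a^2+b^2) / a^2" unfolding x_def using a0
    by (simp add: field_simps power2_eq_square)
  have pp: "0 < pi^2 + 4*x^2" by (simp add: add_pos_nonneg)
  have low: "ereal K0 \<le> PJ (ellipse a b)"
  proof -
    define g0 where "g0 = (\<lambda>t. wpt a b (2*pi*t))"
    note sp = std_path[OF b0 ba, folded g0_def]
    have q: "(wpt a b 0, wpt a b (pi/2), wpt a b pi, wpt a b (3*pi/2)) \<in> S"
      unfolding S_def
    proof (clarsimp, intro exI conjI)
      show "simple_path g0" "pathfinish g0 = pathstart g0" "path_image g0 = frontier (ellipse a b)"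
        using sp by auto
      show "wpt a b 0 = g0 0" "wpt a b (pi/2) = g0 (1/4)" "wpt a b pi = g0 (1/2)" "wpt a b (3*pi/2) = g0 (3/4)"
        unfolding g0_def by simp_all
    qed auto
    have "f (wpt a b 0, wpt a b (pi/2), wpt a b pi, wpt a b (3*pi/2)) = ereal K0"
      unfolding f_def K0_def using std_points[OF b0 ba] by simp
    then show ?thesis unfolding PJe using q by (metis SUP_upper)
  qed
  have up: "PJ (ellipse a b) \<le> ereal K0"
    unfolding PJe
  proof (rule SUP_least)
    fix q assume "q \<in> S"
    then obtain g s1 s2 s3 s4 where g: "simple_path g" "path_image g = frontier (ellipse a b)"
      "0 \<le> s1" "s1 < s2" "s2 < s3" "s3 < s4" "s4 < 1"
      and qe: "q = (g s1, g s2, g s3, g s4)" unfolding S_def by blast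
    have "pfun (g s1) (g s2) (g s3) (g s4) \<le> K0"
      unfolding K0_def using cyclic_bound[OF b0 ba g] .
    then show "f q \<le> ereal K0" unfolding f_def qe by simp
  qed
  have i1: "K0 \<le> 1 / sin x"
  proof -
    have "sin x * (pi^2 + 4*x^2) \<le> 4*pi*x" using sin_upperK x0 by simp
    then have "sin x \<le> 4*pi*x / (pi^2 + 4*x^2)" using pp by (simp add: pos_le_divide_eq)
    also have "\<dots> = 2*a*b/(a^2+b^2)"
    proof -
      have ab2: "a^2+b^2 \<noteq> 0" using a0 by (simp add: add_pos_nonneg)
      have "(2*a*b/(a^2+b^2)) * (pi^2+4*x^2) = (2*a*b/(a^2+b^2)) * (pi^2*(a^2+b^2)/a^2)" unfolding xx ..
      also have "\<dots> = 2*a*b*pi^2/a^2" using aux_cancel[OF ab2, of "a^2" "2*a*b" "pi^2"] a0 by simp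
      also have "\<dots> = 4*pi*x" unfolding x_def using a0 by (simp add: field_simps power2_eq_square)
      finally have "4*pi*x = (2*a*b/(a^2+b^2)) * (pi^2+4*x^2)" ..
      then show ?thesis using pp by (simp add: nonzero_divide_eq_eq)
    qed
    finally have "sin x \<le> 2*a*b/(a^2+b^2)" .
    then have "K0 * sin x \<le> K0 * (2*a*b/(a^2+b^2))"
      unfolding K0_def using a0 b0 by (intro mult_left_mono) auto
    also have "\<dots> = 1"
    proof -
      have ab2: "a^2+b^2 \<noteq> 0" using a0 by (simp add: add_pos_nonneg)
      have "K0 * (2*a*b/(a^2+b^2)) = ((a^2+b^2) * (a*b)) / ((a*b) * (a^2+b^2))" unfolding K0_def
        by (simp add: field_simps)
      also have "\<dots> = 1" using ab2 a0 b0 by simp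
      finally show ?thesis .
    qed
    finally show ?thesis using sx0 by (simp add: le_divide_eq)
  qed
  have i2: "1 / sin x \<le> (2 / pi) * (a/b + b/a)"
  proof -
    have "pi^2 * x \<le> sin x * (pi^2 + 4*x^2)" using sin_lowerK x0 by simp
    then have "pi^2 * x / (pi^2 + 4*x^2) \<le> sin x" using pp by (simp add: divide_le_eq)
    moreover have "pi^2 * x / (pi^2 + 4*x^2) = pi*a*b/(2*(a^2+b^2))"
    proof -
      have ab2: "a^2+b^2 \<noteq> 0" using a0 by (simp add: add_pos_nonneg)
      have "(pi*a*b/(2*(a^2+b^2))) * (pi^2+4*x^2) = ((pi*a*b/2)/(a^2+b^2)) * (pi^2*(a^2+b^2)/a^2)" unfolding xx by simp
      also have "\<dots> = (pi*a*b/2)*pi^2/a^2" using aux_cancel[OF ab2, of "a^2" "pi*a*b/2" "pi^2"] a0 by simp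
      also have "\<dots> = pi^2 * x" unfolding x_def using a0 by (simp add: field_simps power2_eq_square)
      finally have "pi^2 * x = (pi*a*b/(2*(a^2+b^2))) * (pi^2+4*x^2)" ..
      then show ?thesis using pp by (simp add: nonzero_divide_eq_eq)
    qed
    ultimately have h: "pi*a*b/(2*(a^2+b^2)) \<le> sin x" by simp
    have hp: "0 < pi*a*b/(2*(a^2+b^2))" using a0 b0 by (simp add: add_pos_pos)
    have "1 / sin x \<le> 1 / (pi*a*b/(2*(a^2+b^2)))"
      using le_imp_inverse_le[OF h hp] by (simp add: inverse_eq_divide)
    also have "\<dots> = (2 / pi) * (a/b + b/a)" using a0 b0 by (simp add: field_simps power2_eq_square)
    finally show ?thesis .
  qed
  show ?thesis unfolding K0e x_def[symmetric]
    using low up i1 i2 by (meson ereal_less_eq(3) order_trans)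
qed

end
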